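(* Let $\mathcal X,\mathcal Y$ be Polish spaces and $(\gamma_n)_{n\ge1}$ a sequence of Borel probability measures on $\mathcal X\times\mathcal Y$ all having the same first marginal $\mu$. Then there exist Borel maps $\underline\xi:(0,1)\to\mathcal X$ and $\underline\xi_n:(0,1)\to\mathcal Y$, $n\ge1$, such that $(\underline\xi,\underline\xi_n)_\sharp m=\gamma_n$ for every $n$, where $m$ is Lebesgue measure on $(0,1)$.
   Context: $(\underline\xi,\underline\xi_n)_\sharp m$ denotes the image (push-forward) of the Lebesgue measure $m$ on $(0,1)$ under the map $u\mapsto(\underline\xi(u),\underline\xi_n(u))$. Note that $\underline\xi$ is required to be the same for all $n$. *)

theory Defs
  imports "HOL-Probability.Probability"
begin

end

theory Submission
  imports Defs
begin

definition enc :: "(nat \<Rightarrow> bool) \<Rightarrow> real" where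
  "enc b = (\<Sum>i. (if b i then 2 else 0) / 4 ^ Suc i)"

fun encP :: "(nat \<Rightarrow> bool) \<Rightarrow> nat \<Rightarrow> int" where
  "encP b 0 = 0"
| "encP b (Suc n) = 4 * encP b n + (if b n then 2 else 0)"

definition encT :: "(nat \<Rightarrow> bool) \<Rightarrow> nat \<Rightarrow> real" where
  "encT b n = (\<Sum>i. (if b (i + n) then 2 else 0) / 4 ^ Suc i)"

lemma geom_aux: "(\<lambda>i. 2 / (4::real) ^ Suc i) sums (2/3)"
proof -
  have "(\<lambda>i. (1/4::real) ^ i) sums (1 / (1 - 1/4))"
    by (rule geometric_sums) simp
  then have "(\<lambda>i. (1/2) * (1/4::real) ^ i) sums ((1/2) * (1 / (1 - 1/4)))"
    by (rule sums_mult)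
  moreover have "(\<lambda>i. (1/2) * (1/4::real) ^ i) = (\<lambda>i. 2 / (4::real) ^ Suc i)"
    by (auto simp: power_divide field_simps)
  ultimately show ?thesis by simp
qed

lemma encT_summable: "summable (\<lambda>i. (if b (i + n) then 2 else 0) / (4::real) ^ Suc i)"
  by (rule summable_comparison_test[OF _ sums_summable[OF geom_aux]]) auto

lemma enc_summable: "summable (\<lambda>i. (if b i then 2 else 0) / (4::real) ^ Suc i)"
  using encT_summable[of b 0] by simp

lemma encT_bounds: "0 \<le> encT b n" "encT b n \<le> 2/3"
proof -
  show "0 \<le> encT b n" unfolding encT_def
    by (rule suminf_nonneg[OF encT_summable]) auto
  show "encT b n \<le> 2/3" unfolding encT_def sums_unique[OF geom_aux]
    by (rule suminf_le[OF _ encT_summable sums_summable[OF geom_aux]]) auto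
qed

lemma encT_step: "encT b n = (if b n then 2 else 0)/4 + encT b (Suc n) / 4"
proof -
  let ?f = "\<lambda>i. (if b (i + n) then 2 else 0) / (4::real) ^ Suc i"
  have "(\<Sum>i. ?f (Suc i)) = suminf ?f - ?f 0"
    by (rule suminf_split_head[OF encT_summable])
  moreover have "(\<lambda>i. ?f (Suc i)) = (\<lambda>i. ((if b (i + Suc n) then 2 else 0) / (4::real) ^ Suc i) / 4)"
    by (auto simp: field_simps)
  moreover have "(\<Sum>i. ((if b (i + Suc n) then 2 else 0) / (4::real) ^ Suc i) / 4) = encT b (Suc n) / 4"
    unfolding encT_def by (rule suminf_divide[OF encT_summable])
  ultimately show ?thesis unfolding encT_def by auto
qed

lemma enc_eq: "4^n * enc b = real_of_int (encP b n) + encT b n"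
proof (induction n)
  case 0
  then show ?case by (simp add: enc_def encT_def)
next
  case (Suc n)
  have "4 ^ Suc n * enc b = 4 * (real_of_int (encP b n) + encT b n)"
    using Suc by simp
  also have "\<dots> = real_of_int (encP b (Suc n)) + encT b (Suc n)"
    by (subst encT_step) (auto simp: field_simps)
  finally show ?case .
qed

lemma floor_enc: "\<lfloor>4^n * enc b\<rfloor> = encP b n"
  unfolding floor_eq_iff enc_eq using encT_bounds[of b n] by auto

lemma dec_enc: "(\<lfloor>4^Suc n * enc b\<rfloor> - 4 * \<lfloor>4^n * enc b\<rfloor> = 2) = b n"
  unfolding floor_enc by auto

lemma enc_bounds: "0 \<le> enc b \<and> enc b \<le> 1"
  using encT_bounds[of b 0] enc_eq[of 0 b] by simp


lemma polish_embedding: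
  obtains e :: "'a::polish_space \<Rightarrow> real" and g :: "real \<Rightarrow> 'a"
  where "e \<in> borel_measurable borel" "g \<in> borel_measurable borel" "\<And>x. g (e x) = x"
    "\<And>x. 0 \<le> e x \<and> e x \<le> 1"
proof -
  obtain D :: "'a set" where D: "countable D" "\<And>X. open X \<Longrightarrow> X \<noteq> {} \<Longrightarrow> \<exists>d\<in>D. d \<in> X"
    using countable_dense_exists by blast
  have "D \<noteq> {}" using D(2)[of UNIV] by auto
  define d where "d = from_nat_into D"
  have dense: "\<exists>k. dist x (d k) < r" if "r > 0" for x r
  proof -
    obtain y where "y \<in> D" "y \<in> ball x r" using D(2)[of "ball x r"] \<open>r > 0\<close> by auto
    then obtain k where "y = d k" unfolding d_def
      by (metis \<open>countable D\<close> from_nat_into_surj)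
    then show ?thesis using \<open>y \<in> ball x r\<close> by auto
  qed
  define bit where "bit x n = (dist x (d (fst (prod_decode n))) < (1/2)^(snd (prod_decode n)))" for x n
  define e where "e x = enc (bit x)" for x
  define dec where "dec r n = (\<lfloor>4^Suc n * r\<rfloor> - 4 * \<lfloor>4^n * r\<rfloor> = (2::int))" for r :: real and n
  define kk where "kk j r = (LEAST k. dec r (prod_encode (k, j)))" for j r
  define p where "p j r = d (kk j r)" for j r
  define good where "good r = (\<forall>i i'. i \<le> i' \<longrightarrow> dist (p i r) (p i' r) \<le> 2 * (1/2::real)^i)" for r
  define qq where "qq j r = (if good r then p j r else d 0)" for j r
  define g where "g r = lim (\<lambda>j. qq j r)" for r
  have meas_bit[measurable]: "Measurable.pred borel (\<lambda>x. bit x n)" for n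
    unfolding bit_def by measurable
  have "e \<in> borel_measurable borel"
  proof (rule borel_measurable_LIMSEQ_real)
    show "(\<lambda>n. \<Sum>i<n. (if bit x i then 2 else 0) / (4::real) ^ Suc i) \<longlonglongrightarrow> e x" for x
      unfolding e_def enc_def by (rule summable_LIMSEQ[OF enc_summable])
  qed measurable
  moreover
  have meas_dec[measurable]: "Measurable.pred borel (\<lambda>r. dec r n)" for n
    unfolding dec_def by measurable
  have meas_kk[measurable]: "kk j \<in> borel \<rightarrow>\<^sub>M count_space UNIV" for j
    unfolding kk_def by measurable
  have meas_p[measurable]: "p j \<in> borel_measurable borel" for j
    unfolding p_def by measurable
  have meas_good[measurable]: "Measurable.pred borel good"
    unfolding good_def by measurable
  have meas_qq[measurable]: "qq j \<in> borel_measurable borel" for j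
    unfolding qq_def by measurable
  have conv: "(\<lambda>j. qq j r) \<longlonglongrightarrow> g r" for r
  proof (cases "good r")
    case True
    have "Cauchy (\<lambda>j. p j r)"
    proof (rule metric_CauchyI)
      fix \<epsilon> :: real assume "\<epsilon> > 0"
      obtain M where M: "2 * (1/2::real)^M < \<epsilon>"
        using real_arch_pow_inv[of "\<epsilon>/2" "1/2"] \<open>\<epsilon> > 0\<close> by (auto simp: mult.commute)
      show "\<exists>M. \<forall>m\<ge>M. \<forall>n\<ge>M. dist (p m r) (p n r) < \<epsilon>"
      proof (intro exI allI impI)
        fix m n assume "M \<le> m" "M \<le> n"
        have mono: "(1/2::real)^k \<le> (1/2)^M" if "M \<le> k" for k
          using that by (simp add: power_decreasing)
        show "dist (p m r) (p n r) < \<epsilon>"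
        proof (cases "m \<le> n")
          case True
          then have "dist (p m r) (p n r) \<le> 2 * (1/2)^m" using \<open>good r\<close> unfolding good_def by blast
          then show ?thesis using mono[OF \<open>M \<le> m\<close>] M by linarith
        next
          case False
          then have "dist (p n r) (p m r) \<le> 2 * (1/2)^n" using \<open>good r\<close> unfolding good_def by auto
          then have "dist (p m r) (p n r) \<le> 2 * (1/2)^n" by (simp add: dist_commute)
          then show ?thesis using mono[OF \<open>M \<le> n\<close>] M by linarith
        qed
      qed
    qed
    then have "convergent (\<lambda>j. p j r)" by (rule Cauchy_convergent)
    then show ?thesis using True unfolding g_def qq_def by (simp add: convergent_LIMSEQ_iff)
  next
    case False
    then show ?thesis unfolding g_def qq_def by (simp add: limI)
  qed
  have "g \<in> borel_measurable borel"
    by (rule borel_measurable_LIMSEQ_metric[OF meas_qq conv])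
  moreover
  have "g (e x) = x" for x
  proof -
    have decx: "dec (e x) n = bit x n" for n
      unfolding dec_def e_def by (rule dec_enc)
    have pclose: "dist x (p j (e x)) < (1/2)^j" for j
    proof -
      have ex: "\<exists>k. bit x (prod_encode (k, j))"
        using dense[of "(1/2)^j" x] by (auto simp: bit_def)
      have "bit x (prod_encode (kk j (e x), j))"
        unfolding kk_def decx by (rule LeastI_ex[OF ex])
      then show ?thesis by (simp add: bit_def p_def)
    qed
    have "good (e x)" unfolding good_def
    proof (intro allI impI)
      fix i i' :: nat assume "i \<le> i'"
      have "(1/2::real)^i' \<le> (1/2)^i" using \<open>i \<le> i'\<close> by (simp add: power_decreasing)
      moreover have "dist (p i (e x)) (p i' (e x)) \<le> dist x (p i (e x)) + dist x (p i' (e x))"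
        by (rule dist_triangle3)
      ultimately show "dist (p i (e x)) (p i' (e x)) \<le> 2 * (1/2::real)^i"
        using pclose[of i] pclose[of i'] by linarith
    qed
    have "(\<lambda>j. p j (e x)) \<longlonglongrightarrow> x"
    proof (rule metric_LIMSEQ_I)
      fix r :: real assume "r > 0"
      obtain M where M: "(1/2::real)^M < r"
        using real_arch_pow_inv[of r "1/2"] \<open>r > 0\<close> by auto
      show "\<exists>no. \<forall>n\<ge>no. dist (p n (e x)) x < r"
      proof (intro exI allI impI)
        fix n assume "M \<le> n"
        then have "(1/2::real)^n \<le> (1/2)^M" by (simp add: power_decreasing)
        moreover have "dist (p n (e x)) x < (1/2)^n" using pclose[of n] by (simp add: dist_commute)
        ultimately show "dist (p n (e x)) x < r" using M by linarith
      qed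
    qed
    then have "(\<lambda>j. qq j (e x)) \<longlonglongrightarrow> x" using \<open>good (e x)\<close> by (simp add: qq_def)
    then show "g (e x) = x" using conv[of "e x"] by (rule LIMSEQ_unique[rotated])
  qed
  moreover have "0 \<le> e x \<and> e x \<le> 1" for x unfolding e_def by (rule enc_bounds)
  ultimately show ?thesis using that by blast
qed

lemma prob_space_Omega: "prob_space (restrict_space lborel {0<..<1::real})"
  by (auto simp add: emeasure_restrict_space space_restrict_space intro!: prob_spaceI)

lemma polish_sample:
  fixes P :: "'a::polish_space measure"
  assumes sP: "sets P = sets borel" and pP: "prob_space P"
  shows "\<exists>f::real \<Rightarrow> 'a. f \<in> borel_measurable borel \<and> distr (restrict_space lborel {0<..<1}) borel f = P"
proof -
  obtain e :: "'a \<Rightarrow> real" and g where eg: "e \<in> borel_measurable borel" "g \<in> borel_measurable borel"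
    "\<And>x. g (e x) = x" "\<And>x. 0 \<le> e x \<and> e x \<le> 1" by (erule polish_embedding)
  have eP[measurable]: "e \<in> borel_measurable P" by (subst measurable_cong_sets[OF sP refl]) (rule eg(1))
  define P' where "P' = distr P borel e"
  interpret P: prob_space P by fact
  have "cdf_distribution P'"
    unfolding cdf_distribution_def real_distribution_def real_distribution_axioms_def P'_def
    by (auto intro!: P.prob_space_distr)
  then interpret P': cdf_distribution P' .
  define I where "I \<omega> = Inf {x. \<omega> \<le> cdf P' x}" for \<omega>
  define J where "J t = I (if t \<in> {0<..<1} then t else 1/2)" for t :: real
  have I_meas: "I \<in> borel_measurable (restrict_space borel {0<..<1})"
    unfolding I_def by (rule P'.measurable_CI)
  have "(\<lambda>t::real. if t \<in> {0<..<1} then t else 1/2) \<in> borel \<rightarrow>\<^sub>M restrict_space borel {0<..<1}"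
    by (rule measurable_restrict_space2) auto
  then have J_meas[measurable]: "J \<in> borel_measurable borel"
    unfolding J_def using I_meas by (rule measurable_compose)
  have "distr (restrict_space lborel {0<..<1}) borel J = distr (restrict_space lborel {0<..<1}) borel I"
    by (rule distr_cong) (auto simp: J_def space_restrict_space)
  also have "\<dots> = P'" unfolding I_def by (rule P'.distr_I_eq_M)
  finally have dJ: "distr (restrict_space lborel {0<..<1}) borel J = P'" .
  have "distr (restrict_space lborel {0<..<1}) borel (g \<circ> J) = distr (distr (restrict_space lborel {0<..<1}) borel J) borel g"
    using J_meas by (intro distr_distr[symmetric] eg(2) measurable_restrict_space1) simp
  also have "\<dots> = distr P borel (g \<circ> e)" unfolding dJ P'_def
    by (rule distr_distr) (rule eg(2), rule eP)
  also have "\<dots> = distr P borel (\<lambda>x. x)" by (rule distr_cong) (auto simp: eg(3))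
  also have "\<dots> = P" using sP[symmetric] by (rule distr_id2)
  finally show ?thesis using eg by (intro exI[of _ "g \<circ> J"]) auto
qed

definition dy :: "nat \<Rightarrow> real \<Rightarrow> real" where
  "dy k t = (of_int \<lfloor>t * 2^k\<rfloor> + 1) / 2^k"

lemma dy_Rats: "dy k t \<in> \<rat>"
  unfolding dy_def by (intro Rats_divide Rats_add Rats_of_int Rats_power) auto

lemma dy_gt: "t < dy k t"
proof -
  have "t * 2^k < of_int \<lfloor>t * 2^k\<rfloor> + 1" by linarith
  then show ?thesis unfolding dy_def by (simp add: field_simps)
qed

lemma dy_le: "dy k t \<le> t + (1/2)^k"
proof -
  have "of_int \<lfloor>t * 2^k\<rfloor> \<le> t * 2^k" by linarith
  then show ?thesis unfolding dy_def by (simp add: field_simps power_divide)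
qed

lemma dy_dec: "dy (Suc k) t \<le> dy k t"
proof -
  define y where "y = t * 2^k"
  have "\<lfloor>2 * y\<rfloor> \<le> 2 * \<lfloor>y\<rfloor> + 1"
  proof -
    have "2 * y < 2 * of_int \<lfloor>y\<rfloor> + 2" by linarith
    then have "\<lfloor>2 * y\<rfloor> < 2 * \<lfloor>y\<rfloor> + 2" by linarith
    then show ?thesis by linarith
  qed
  then have "real_of_int \<lfloor>2 * y\<rfloor> \<le> real_of_int (2 * \<lfloor>y\<rfloor> + 1)"
    by (simp only: of_int_le_iff)
  then have "of_int \<lfloor>2 * y\<rfloor> + 1 \<le> 2 * (of_int \<lfloor>y\<rfloor> + (1::real))"
    by simp
  then have "(of_int \<lfloor>2 * y\<rfloor> + 1) / (2::real) ^ Suc k \<le> (2 * (of_int \<lfloor>y\<rfloor> + 1)) / 2 ^ Suc k"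
    by (intro divide_right_mono) auto
  also have "\<dots> = (of_int \<lfloor>y\<rfloor> + 1) / 2 ^ k" by (simp add: field_simps)
  finally have *: "(of_int \<lfloor>2 * y\<rfloor> + 1) / (2::real) ^ Suc k \<le> (of_int \<lfloor>y\<rfloor> + 1) / 2 ^ k" .
  have "t * 2 ^ Suc k = 2 * y" by (simp add: y_def)
  then have "dy (Suc k) t = (of_int \<lfloor>2 * y\<rfloor> + 1) / (2::real) ^ Suc k"
    unfolding dy_def by (simp only:)
  then show ?thesis using * unfolding dy_def y_def by simp
qed

lemma dy_eventually_less: "q > t \<Longrightarrow> \<exists>K. \<forall>k\<ge>K. dy k t < q"
proof -
  assume "q > t"
  obtain K where K: "(1/2::real)^K < q - t"
    using real_arch_pow_inv[of "q - t" "1/2"] \<open>q > t\<close> by auto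
  show ?thesis
  proof (intro exI allI impI)
    fix k assume "K \<le> k"
    then have "(1/2::real)^k \<le> (1/2)^K" by (simp add: power_decreasing)
    then show "dy k t < q" using dy_le[of k t] K by linarith
  qed
qed

locale qcdf =
  fixes F :: "real \<Rightarrow> real"
  assumes mono: "\<And>q q'. q \<in> \<rat> \<Longrightarrow> q' \<in> \<rat> \<Longrightarrow> q \<le> q' \<Longrightarrow> F q \<le> F q'"
    and nonneg: "\<And>q. q \<in> \<rat> \<Longrightarrow> 0 \<le> F q"
    and neg: "\<And>q. q \<in> \<rat> \<Longrightarrow> q < 0 \<Longrightarrow> F q = 0"
    and one: "\<And>q. q \<in> \<rat> \<Longrightarrow> 1 \<le> q \<Longrightarrow> F q = 1"
begin

definition G :: "real \<Rightarrow> real" where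
  "G t = (INF q\<in>{q\<in>\<rat>. (t::real) < q}. F q)"

lemma le1: "q \<in> \<rat> \<Longrightarrow> F q \<le> 1"
proof -
  assume q: "q \<in> \<rat>"
  obtain r where r: "r \<in> \<rat>" "max q 1 < r" using Rats_dense_in_real[of "max q 1" "max q 1 + 1"] by auto
  then have "F q \<le> F r" using mono[OF q r(1)] by auto
  also have "F r = 1" using one[OF r(1)] r by auto
  finally show ?thesis .
qed

lemma ne: "{q\<in>\<rat>. (t::real) < q} \<noteq> {}"
  using Rats_dense_in_real[of t "t+1"] by auto

lemma bdd: "bdd_below (F ` {q\<in>\<rat>. (t::real) < q})"
  by (rule bdd_belowI[of _ 0]) (auto intro: nonneg)

lemma G_le: "q \<in> \<rat> \<Longrightarrow> t < q \<Longrightarrow> G t \<le> F q"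
  unfolding G_def by (rule cINF_lower[OF bdd]) auto

lemma G_ge: "(\<And>q. q \<in> \<rat> \<Longrightarrow> t < q \<Longrightarrow> c \<le> F q) \<Longrightarrow> c \<le> G t"
  unfolding G_def by (rule cINF_greatest[OF ne]) auto

lemma G_nonneg: "0 \<le> G t"
  by (rule G_ge) (auto intro: nonneg)

lemma G_le1: "G t \<le> 1"
proof -
  obtain q where "q \<in> \<rat>" "t < q" using ne[of t] by auto
  then show ?thesis using G_le[of q t] le1[of q] by linarith
qed

lemma G_mono: "t \<le> s \<Longrightarrow> G t \<le> G s"
  by (rule G_ge) (auto intro: G_le)

lemma G_neg: "t < 0 \<Longrightarrow> G t = 0"
proof -
  assume "t < 0"
  obtain q where q: "q \<in> \<rat>" "t < q" "q < 0" using Rats_dense_in_real[OF \<open>t < 0\<close>] by auto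
  then have "G t \<le> 0" using G_le[OF q(1,2)] neg[OF q(1,3)] by simp
  then show ?thesis using G_nonneg[of t] by simp
qed

lemma G_one: "1 \<le> t \<Longrightarrow> G t = 1"
proof -
  assume "1 \<le> t"
  have "1 \<le> G t" by (rule G_ge) (use \<open>1 \<le> t\<close> one in auto)
  then show ?thesis using G_le1[of t] by simp
qed

lemma G_approx: "\<epsilon> > 0 \<Longrightarrow> \<exists>q\<in>\<rat>. t < q \<and> F q < G t + \<epsilon>"
proof -
  assume "\<epsilon> > 0"
  have "G t < G t + \<epsilon>" using \<open>\<epsilon> > 0\<close> by simp
  then have "(INF q\<in>{q\<in>\<rat>. (t::real) < q}. F q) < G t + \<epsilon>" unfolding G_def .
  then show ?thesis by (subst (asm) cINF_less_iff[OF ne bdd]) auto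
qed

lemma G_right_cont: "continuous (at_right t) G"
proof (subst continuous_at_right_real_increasing)
  show "\<And>x y. x \<le> y \<Longrightarrow> G x \<le> G y" by (rule G_mono)
  show "\<forall>\<epsilon>>0. \<exists>\<delta>>0. G (t + \<delta>) - G t < \<epsilon>"
  proof (intro allI impI)
    fix \<epsilon> :: real assume "\<epsilon> > 0"
    obtain q where q: "q \<in> \<rat>" "t < q" "F q < G t + \<epsilon>" using G_approx[OF \<open>\<epsilon> > 0\<close>] by auto
    have "t + (q - t)/2 < q" using q(2) by (simp add: field_simps)
    then have "G (t + (q - t)/2) \<le> F q" using q(1) by (intro G_le) auto
    then show "\<exists>\<delta>>0. G (t + \<delta>) - G t < \<epsilon>" using q
      by (intro exI[of _ "(q - t)/2"]) auto
  qed
qed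

lemma G_dy_lim: "(\<lambda>k. F (dy k t)) \<longlonglongrightarrow> G t"
proof (rule order_tendstoI)
  fix a assume "a < G t"
  show "\<forall>\<^sub>F k in sequentially. a < F (dy k t)"
    by (intro always_eventually allI) (rule less_le_trans[OF \<open>a < G t\<close> G_le[OF dy_Rats dy_gt]])
next
  fix a assume "G t < a"
  then obtain q where q: "q \<in> \<rat>" "t < q" "F q < a" using G_approx[of "a - G t" t] by auto
  obtain K where K: "\<And>k. k \<ge> K \<Longrightarrow> dy k t < q" using dy_eventually_less[OF q(2)] by auto
  show "\<forall>\<^sub>F k in sequentially. F (dy k t) < a"
    unfolding eventually_sequentially
  proof (intro exI[of _ K] allI impI)
    fix k assume "K \<le> k"
    then have "F (dy k t) \<le> F q" using K mono[OF dy_Rats q(1)] less_imp_le by blast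
    then show "F (dy k t) < a" using q(3) by linarith
  qed
qed

lemma G_at_bot: "(G \<longlongrightarrow> 0) at_bot"
proof (rule tendsto_eventually)
  show "\<forall>\<^sub>F x in at_bot. G x = 0" unfolding eventually_at_bot_linorder
    by (intro exI[of _ "-1"]) (auto intro: G_neg)
qed

lemma G_at_top: "(G \<longlongrightarrow> 1) at_top"
proof (rule tendsto_eventually)
  show "\<forall>\<^sub>F x in at_top. G x = 1" unfolding eventually_at_top_linorder
    by (intro exI[of _ "1"]) (auto intro: G_one)
qed

lemma rcm: "right_continuous_mono G 0 1"
proof
  show "\<And>x. continuous (at_right x) G" by (rule G_right_cont)
  show "mono G" by (rule monoI) (rule G_mono)
  show "(G \<longlongrightarrow> 0) at_bot" by (rule G_at_bot)
  show "(G \<longlongrightarrow> 1) at_top" by (rule G_at_top)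
qed

end

lemma measurable_snd_borel: "snd \<in> borel_measurable (borel :: ('a::second_countable_topology \<times> 'b::second_countable_topology) measure)"
  by (subst borel_prod[symmetric]) simp

lemma measurable_fst_borel: "fst \<in> borel_measurable (borel :: ('a::second_countable_topology \<times> 'b::second_countable_topology) measure)"
  by (subst borel_prod[symmetric]) simp

lemma AE_le_from_set_integrals:
  fixes f g :: "'a \<Rightarrow> ennreal"
  assumes [measurable]: "f \<in> borel_measurable M" "g \<in> borel_measurable M"
    and fin: "integral\<^sup>N M g \<noteq> \<infinity>"
    and le: "\<And>A. A \<in> sets M \<Longrightarrow> (\<integral>\<^sup>+x. f x * indicator A x \<partial>M) \<le> (\<integral>\<^sup>+x. g x * indicator A x \<partial>M)"
  shows "AE x in M. f x \<le> g x"
proof -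
  let ?P = "\<lambda>f A. \<integral>\<^sup>+ x. f x * indicator A x \<partial>M"
  let ?N = "{x\<in>space M. g x < f x}"
  have N[measurable]: "?N \<in> sets M" by measurable
  have "?P g ?N \<le> integral\<^sup>N M g" by (intro nn_integral_mono) (auto split: split_indicator)
  then have Pg_fin: "?P g ?N \<noteq> \<infinity>" using fin by (auto simp: top_unique)
  have "?P (\<lambda>x. f x - g x) ?N = (\<integral>\<^sup>+x. f x * indicator ?N x - g x * indicator ?N x \<partial>M)"
    by (auto intro!: nn_integral_cong simp: indicator_def)
  also have "\<dots> = ?P f ?N - ?P g ?N"
    by (rule nn_integral_diff[OF _ _ Pg_fin]) (auto split: split_indicator simp: less_imp_le)
  also have "\<dots> = 0"
    using le[OF N] Pg_fin by (intro diff_eq_0_ennreal) (auto simp: less_top[symmetric] top_unique)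
  finally have "?P (\<lambda>x. f x - g x) ?N = 0" .
  then have "AE x in M. (f x - g x) * indicator ?N x = 0"
    by (subst (asm) nn_integral_0_iff_AE) auto
  then show ?thesis
  proof (rule AE_mp[OF _ AE_I2[OF impI]])
    fix x assume x: "x \<in> space M" "(f x - g x) * indicator ?N x = 0"
    show "f x \<le> g x"
    proof (rule ccontr)
      assume "\<not> f x \<le> g x"
      then have "x \<in> ?N" using x by (auto simp: not_le)
      then have "f x - g x = 0" using x by simp
      then have "f x \<le> g x" by (rule ennreal_minus_eq_0)
      then show False using \<open>\<not> f x \<le> g x\<close> by simp
    qed
  qed
qed

lemma measure_eq_rect:
  fixes M N :: "('x::second_countable_topology \<times> real) measure"
  assumes sM: "sets M = sets borel" and sN: "sets N = sets borel"
    and fM: "finite_measure M" and fN: "finite_measure N"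
    and eq: "\<And>A t. A \<in> sets borel \<Longrightarrow> emeasure M (A \<times> {..t}) = emeasure N (A \<times> {..t})"
  shows "M = N"
proof -
  interpret M: finite_measure M by fact
  interpret N: finite_measure N by fact
  have rect: "emeasure M (A \<times> B) = emeasure N (A \<times> B)" if A: "A \<in> sets borel" and B: "B \<in> sets borel" for A B
  proof -
    have AU: "A \<times> UNIV \<in> sets (borel :: ('x \<times> real) measure)"
      using A by (simp add: borel_prod[symmetric])
    define MA where "MA = distr (density M (indicator (A \<times> UNIV))) borel snd"
    define NA where "NA = distr (density N (indicator (A \<times> UNIV))) borel snd"
    have MA: "emeasure MA B = emeasure M (A \<times> B)" if "B \<in> sets borel" for B
    proof -
      have snd1: "snd \<in> measurable M borel"
        by (subst measurable_cong_sets[OF sM refl]) (rule measurable_snd_borel)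
      have snd2: "snd \<in> measurable (density M (indicator (A \<times> UNIV))) borel"
        by (subst measurable_cong_sets[OF sets_density refl]) (rule snd1)
      have S: "snd -` B \<inter> space M \<in> sets M" by (rule measurable_sets[OF snd1 that])
      have AU': "A \<times> UNIV \<in> sets M" using AU sM by simp
      have "emeasure MA B = emeasure (density M (indicator (A \<times> UNIV))) (snd -` B \<inter> space (density M (indicator (A \<times> UNIV))))"
        unfolding MA_def by (rule emeasure_distr[OF snd2 that])
      also have "\<dots> = emeasure (density M (indicator (A \<times> UNIV))) (snd -` B \<inter> space M)"
        by (simp only: space_density)
      also have "\<dots> = emeasure M ((A \<times> UNIV) \<inter> (snd -` B \<inter> space M))"
        by (rule emeasure_restricted[OF AU' S])
      also have "(A \<times> UNIV) \<inter> (snd -` B \<inter> space M) = A \<times> B"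
        using sets_eq_imp_space_eq[OF sM] by auto
      finally show ?thesis .
    qed
    have NA: "emeasure NA B = emeasure N (A \<times> B)" if "B \<in> sets borel" for B
    proof -
      have snd1: "snd \<in> measurable N borel"
        by (subst measurable_cong_sets[OF sN refl]) (rule measurable_snd_borel)
      have snd2: "snd \<in> measurable (density N (indicator (A \<times> UNIV))) borel"
        by (subst measurable_cong_sets[OF sets_density refl]) (rule snd1)
      have S: "snd -` B \<inter> space N \<in> sets N" by (rule measurable_sets[OF snd1 that])
      have AU': "A \<times> UNIV \<in> sets N" using AU sN by simp
      have "emeasure NA B = emeasure (density N (indicator (A \<times> UNIV))) (snd -` B \<inter> space (density N (indicator (A \<times> UNIV))))"
        unfolding NA_def by (rule emeasure_distr[OF snd2 that])
      also have "\<dots> = emeasure (density N (indicator (A \<times> UNIV))) (snd -` B \<inter> space N)"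
        by (simp only: space_density)
      also have "\<dots> = emeasure N ((A \<times> UNIV) \<inter> (snd -` B \<inter> space N))"
        by (rule emeasure_restricted[OF AU' S])
      also have "(A \<times> UNIV) \<inter> (snd -` B \<inter> space N) = A \<times> B"
        using sets_eq_imp_space_eq[OF sN] by auto
      finally show ?thesis .
    qed
    have "MA = NA"
    proof (rule measure_eqI_generator_eq[where E="range atMost" and \<Omega>=UNIV and A="\<lambda>i. {..real i}"])
      show "Int_stable (range atMost :: real set set)"
        by (auto simp: Int_stable_def)
      show "range atMost \<subseteq> Pow (UNIV :: real set)" by auto
      show "sets MA = sigma_sets UNIV (range atMost)"
        unfolding MA_def by (simp add: borel_eq_atMost)
      show "sets NA = sigma_sets UNIV (range atMost)"
        unfolding NA_def by (simp add: borel_eq_atMost)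
      show "range (\<lambda>i. {..real i}) \<subseteq> range atMost" by auto
      show "(\<Union>i. {..real i}) = UNIV" by (auto intro: real_arch_simple)
      show "emeasure MA {..real i} \<noteq> \<infinity>" for i
        using MA[of "{..real i}"] by (simp add: M.emeasure_real)
      fix X :: "real set" assume "X \<in> range atMost"
      then obtain t where "X = {..t}" by auto
      then show "emeasure MA X = emeasure NA X" using MA NA eq[OF A] by simp
    qed
    then show ?thesis using MA[OF B] NA[OF B] by simp
  qed
  show ?thesis
  proof (rule measure_eqI_generator_eq[OF Int_stable_pair_measure_generator[of borel borel], where \<Omega>=UNIV and A="\<lambda>_. UNIV"])
    show "{a \<times> b |a b. a \<in> sets borel \<and> b \<in> sets borel} \<subseteq> Pow UNIV" by auto
    show "sets M = sigma_sets UNIV {a \<times> b |(a::'x set) (b::real set). a \<in> sets borel \<and> b \<in> sets borel}"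
      unfolding sM borel_prod[symmetric] sets_pair_measure by simp
    show "sets N = sigma_sets UNIV {a \<times> b |(a::'x set) (b::real set). a \<in> sets borel \<and> b \<in> sets borel}"
      unfolding sN borel_prod[symmetric] sets_pair_measure by simp
    show "range (\<lambda>_. UNIV) \<subseteq> {a \<times> b |(a::'x set) (b::real set). a \<in> sets borel \<and> b \<in> sets borel}"
      by (auto intro!: exI[of _ UNIV])
    show "(\<Union>i::nat. UNIV) = UNIV" by simp
    show "emeasure M UNIV \<noteq> \<infinity>" for i :: nat by (simp add: M.emeasure_real)
    fix X assume "X \<in> {a \<times> b |(a::'x set) (b::real set). a \<in> sets borel \<and> b \<in> sets borel}"
    then show "emeasure M X = emeasure N X" using rect by auto
  qed
qed

lemma emeasure_Omega_Iic:
  assumes "0 \<le> c" "c \<le> (1::real)"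
  shows "emeasure (restrict_space lborel {0<..<1}) ({0<..<1} \<inter> {..c}) = ennreal c"
proof -
  have "emeasure (restrict_space lborel {0<..<1}) ({0<..<1} \<inter> {..c}) = emeasure lborel ({0<..<1::real} \<inter> {..c})"
    by (rule emeasure_restrict_space) auto
  also have "\<dots> = ennreal c"
  proof (cases "c < 1")
    case True
    then have "{0<..<1::real} \<inter> {..c} = {0<..c}" by auto
    then show ?thesis using assms by simp
  next
    case False
    then have "c = 1" using assms by simp
    then have "{0<..<1::real} \<inter> {..c} = {0<..<1}" by auto
    then show ?thesis using \<open>c = 1\<close> by simp
  qed
  finally show ?thesis .
qed

lemma cond_sample:
  fixes \<gamma> :: "('x::polish_space \<times> real) measure" and \<mu> :: "'x measure"
  assumes sg: "sets \<gamma> = sets borel" and pg: "prob_space \<gamma>"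
    and marg: "distr \<gamma> borel fst = \<mu>"
    and conc: "AE z in \<gamma>. snd z \<in> {0..1}"
  shows "\<exists>S :: 'x \<Rightarrow> real \<Rightarrow> real. (\<lambda>z. S (fst z) (snd z)) \<in> borel_measurable borel \<and>
           distr (\<mu> \<Otimes>\<^sub>M restrict_space lborel {0<..<1}) borel (\<lambda>(x,v). (x, S x v)) = \<gamma>"
proof -
  interpret \<gamma>: prob_space \<gamma> by fact
  have sm: "sets \<mu> = sets borel" using marg[symmetric] by simp
  have spg: "space \<gamma> = UNIV" using sets_eq_imp_space_eq[OF sg] by simp
  have spm: "space \<mu> = UNIV" using sets_eq_imp_space_eq[OF sm] by simp
  have fst_meas: "fst \<in> measurable \<gamma> borel"
    by (subst measurable_cong_sets[OF sg refl]) (rule measurable_fst_borel)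
  have pm: "prob_space \<mu>" unfolding marg[symmetric] by (rule \<gamma>.prob_space_distr[OF fst_meas])
  interpret \<mu>: prob_space \<mu> by fact
  have rect_sets: "A \<times> B \<in> sets \<gamma>" if "A \<in> sets borel" "B \<in> sets borel" for A B
    using that unfolding sg borel_prod[symmetric] by (rule pair_measureI)
  have mu_rect: "emeasure \<mu> A = emeasure \<gamma> (A \<times> UNIV)" if A: "A \<in> sets borel" for A
  proof -
    have "emeasure \<mu> A = emeasure \<gamma> (fst -` A \<inter> space \<gamma>)"
      unfolding marg[symmetric] by (rule emeasure_distr[OF fst_meas A])
    also have "fst -` A \<inter> space \<gamma> = A \<times> UNIV" using spg by auto
    finally show ?thesis .
  qed
  have gfin: "emeasure \<gamma> X \<noteq> \<infinity>" for X by (simp add: \<gamma>.emeasure_real)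
  define \<nu> where "\<nu> q = distr (density \<gamma> (indicator (UNIV \<times> {..q}))) borel fst" for q :: real
  have nu: "emeasure (\<nu> q) A = emeasure \<gamma> (A \<times> {..q})" if A: "A \<in> sets borel" for q A
  proof -
    have fst2: "fst \<in> measurable (density \<gamma> (indicator (UNIV \<times> {..q}))) borel"
      by (subst measurable_cong_sets[OF sets_density refl]) (rule fst_meas)
    have S: "fst -` A \<inter> space \<gamma> \<in> sets \<gamma>" by (rule measurable_sets[OF fst_meas A])
    have U: "UNIV \<times> {..q} \<in> sets \<gamma>" by (rule rect_sets) auto
    have "emeasure (\<nu> q) A = emeasure (density \<gamma> (indicator (UNIV \<times> {..q}))) (fst -` A \<inter> space (density \<gamma> (indicator (UNIV \<times> {..q}))))"
      unfolding \<nu>_def by (rule emeasure_distr[OF fst2 A])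
    also have "\<dots> = emeasure (density \<gamma> (indicator (UNIV \<times> {..q}))) (fst -` A \<inter> space \<gamma>)"
      by (simp only: space_density)
    also have "\<dots> = emeasure \<gamma> ((UNIV \<times> {..q}) \<inter> (fst -` A \<inter> space \<gamma>))"
      by (rule emeasure_restricted[OF U S])
    also have "(UNIV \<times> {..q}) \<inter> (fst -` A \<inter> space \<gamma>) = A \<times> {..q}" using spg by auto
    finally show ?thesis .
  qed
  have sets_nu: "sets (\<nu> q) = sets \<mu>" for q by (simp add: \<nu>_def sm)
  have ac: "absolutely_continuous \<mu> (\<nu> q)" for q
    unfolding absolutely_continuous_def
  proof
    fix A assume "A \<in> null_sets \<mu>"
    then have A: "A \<in> sets borel" "emeasure \<mu> A = 0" using sm by auto
    have "emeasure (\<nu> q) A = emeasure \<gamma> (A \<times> {..q})" by (rule nu[OF A(1)])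
    also have "\<dots> \<le> emeasure \<gamma> (A \<times> UNIV)" by (rule emeasure_mono) (auto intro: rect_sets A)
    also have "\<dots> = 0" using mu_rect[OF A(1)] A(2) by simp
    finally show "A \<in> null_sets (\<nu> q)" using A(1) sets_nu sm by auto
  qed
  define \<phi> where "\<phi> q = RN_deriv \<mu> (\<nu> q)" for q
  have phi_meas_mu: "\<phi> q \<in> borel_measurable \<mu>" for q unfolding \<phi>_def by (rule borel_measurable_RN_deriv)
  have phi_meas[measurable]: "\<phi> q \<in> borel_measurable borel" for q
    using phi_meas_mu[of q] by (simp add: measurable_cong_sets[OF sm refl])
  have phi_int: "(\<integral>\<^sup>+x. \<phi> q x * indicator A x \<partial>\<mu>) = emeasure \<gamma> (A \<times> {..q})" if A: "A \<in> sets borel" for q A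
  proof -
    have "density \<mu> (\<phi> q) = \<nu> q" unfolding \<phi>_def
      by (rule \<mu>.density_RN_deriv[OF ac sets_nu])
    then have "emeasure (density \<mu> (\<phi> q)) A = emeasure (\<nu> q) A" by simp
    then show ?thesis using A sm phi_meas_mu[of q] by (simp add: emeasure_density nu)
  qed
  have phi_total: "integral\<^sup>N \<mu> (\<phi> q) = emeasure \<gamma> (UNIV \<times> {..q})" for q
  proof -
    have "integral\<^sup>N \<mu> (\<phi> q) = (\<integral>\<^sup>+x. \<phi> q x * indicator UNIV x \<partial>\<mu>)" by simp
    also have "\<dots> = emeasure \<gamma> (UNIV \<times> {..q})" by (rule phi_int) simp
    finally show ?thesis .
  qed
  have int_one: "(\<integral>\<^sup>+x. 1 * indicator A x \<partial>\<mu>) = emeasure \<gamma> (A \<times> UNIV)" if A: "A \<in> sets borel" for A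
    using A sm by (simp add: mu_rect)
  have one_fin: "integral\<^sup>N \<mu> (\<lambda>_. 1) \<noteq> \<infinity>" by (simp add: \<mu>.emeasure_space_1)
  have ae_mono: "AE x in \<mu>. \<phi> q x \<le> \<phi> q' x" if "q \<le> q'" for q q'
  proof (rule AE_le_from_set_integrals[OF phi_meas_mu phi_meas_mu])
    show "integral\<^sup>N \<mu> (\<phi> q') \<noteq> \<infinity>" unfolding phi_total by (rule gfin)
    fix A assume "A \<in> sets \<mu>"
    then have A: "A \<in> sets borel" using sm by simp
    show "(\<integral>\<^sup>+x. \<phi> q x * indicator A x \<partial>\<mu>) \<le> (\<integral>\<^sup>+x. \<phi> q' x * indicator A x \<partial>\<mu>)"
      unfolding phi_int[OF A] using that by (intro emeasure_mono rect_sets A) auto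
  qed
  have ae_le1: "AE x in \<mu>. \<phi> q x \<le> 1" for q
  proof (rule AE_le_from_set_integrals[OF phi_meas_mu])
    show "(\<lambda>_. 1) \<in> borel_measurable \<mu>" by simp
    show "integral\<^sup>N \<mu> (\<lambda>_. 1) \<noteq> \<infinity>" by (rule one_fin)
    fix A assume "A \<in> sets \<mu>"
    then have A: "A \<in> sets borel" using sm by simp
    show "(\<integral>\<^sup>+x. \<phi> q x * indicator A x \<partial>\<mu>) \<le> (\<integral>\<^sup>+x. 1 * indicator A x \<partial>\<mu>)"
      unfolding phi_int[OF A] int_one[OF A] by (intro emeasure_mono rect_sets A) auto
  qed
  have ae_neg: "AE x in \<mu>. \<phi> q x \<le> 0" if "q < 0" for q
  proof (rule AE_le_from_set_integrals[OF phi_meas_mu])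
    show "(\<lambda>_. 0) \<in> borel_measurable \<mu>" by simp
    show "integral\<^sup>N \<mu> (\<lambda>_. 0) \<noteq> \<infinity>" by simp
    fix A assume "A \<in> sets \<mu>"
    then have A: "A \<in> sets borel" using sm by simp
    have "emeasure \<gamma> (A \<times> {..q}) = emeasure \<gamma> {}"
      by (rule emeasure_eq_AE) (use conc that in \<open>auto intro: rect_sets A\<close>)
    then show "(\<integral>\<^sup>+x. \<phi> q x * indicator A x \<partial>\<mu>) \<le> (\<integral>\<^sup>+x. 0 * indicator A x \<partial>\<mu>)"
      unfolding phi_int[OF A] by simp
  qed
  have ae_ge1: "AE x in \<mu>. 1 \<le> \<phi> q x" if "1 \<le> q" for q
  proof (rule AE_le_from_set_integrals[OF _ phi_meas_mu])
    show "(\<lambda>_. 1) \<in> borel_measurable \<mu>" by simp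
    show "integral\<^sup>N \<mu> (\<phi> q) \<noteq> \<infinity>" unfolding phi_total by (rule gfin)
    fix A assume "A \<in> sets \<mu>"
    then have A: "A \<in> sets borel" using sm by simp
    have "emeasure \<gamma> (A \<times> UNIV) = emeasure \<gamma> (A \<times> {..q})"
      by (rule emeasure_eq_AE) (use conc that in \<open>auto intro: rect_sets A\<close>)
    then show "(\<integral>\<^sup>+x. 1 * indicator A x \<partial>\<mu>) \<le> (\<integral>\<^sup>+x. \<phi> q x * indicator A x \<partial>\<mu>)"
      unfolding phi_int[OF A] int_one[OF A] by simp
  qed
  define Good where "Good x = ((\<forall>q\<in>\<rat>. \<forall>q'\<in>\<rat>. q \<le> q' \<longrightarrow> \<phi> q x \<le> \<phi> q' x) \<and> (\<forall>q\<in>\<rat>. \<phi> q x \<le> 1)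
     \<and> (\<forall>q\<in>\<rat>. q < 0 \<longrightarrow> \<phi> q x = 0) \<and> (\<forall>q\<in>\<rat>. 1 \<le> q \<longrightarrow> \<phi> q x = 1))" for x
  have AE_Good: "AE x in \<mu>. Good x"
  proof -
    have c: "countable (\<rat> :: real set)" by (rule countable_rat)
    have 1: "AE x in \<mu>. \<forall>q\<in>\<rat>. \<forall>q'\<in>\<rat>. q \<le> q' \<longrightarrow> \<phi> q x \<le> \<phi> q' x"
      using ae_mono by (simp add: AE_ball_countable[OF c])
    have 2: "AE x in \<mu>. \<forall>q\<in>\<rat>. \<phi> q x \<le> 1"
      using ae_le1 by (simp add: AE_ball_countable[OF c])
    have 3: "AE x in \<mu>. \<forall>q\<in>\<rat>. q < 0 \<longrightarrow> \<phi> q x \<le> 0"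
      using ae_neg by (simp add: AE_ball_countable[OF c])
    have 4: "AE x in \<mu>. \<forall>q\<in>\<rat>. 1 \<le> q \<longrightarrow> 1 \<le> \<phi> q x"
      using ae_ge1 by (simp add: AE_ball_countable[OF c])
    show ?thesis using 1 2 3 4 unfolding Good_def
      by eventually_elim (auto intro: antisym)
  qed
  have Good_meas[measurable]: "Measurable.pred borel Good"
    unfolding Good_def by (measurable; simp add: countable_rat)
  define F where "F q x = (if Good x then enn2real (\<phi> q x) else (if 0 \<le> q then 1 else 0))" for q x
  have F_meas[measurable]: "F q \<in> borel_measurable borel" for q unfolding F_def by measurable
  have qc: "qcdf (\<lambda>q. F q x)" for x
  proof (cases "Good x")
    case True
    then have g1: "\<And>q q'. q \<in> \<rat> \<Longrightarrow> q' \<in> \<rat> \<Longrightarrow> q \<le> q' \<Longrightarrow> \<phi> q x \<le> \<phi> q' x"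
      and g2: "\<And>q. q \<in> \<rat> \<Longrightarrow> \<phi> q x \<le> 1"
      and g3: "\<And>q. q \<in> \<rat> \<Longrightarrow> q < 0 \<Longrightarrow> \<phi> q x = 0"
      and g4: "\<And>q. q \<in> \<rat> \<Longrightarrow> 1 \<le> q \<Longrightarrow> \<phi> q x = 1"
      unfolding Good_def by auto
    show ?thesis
    proof
      fix q q' :: real assume q: "q \<in> \<rat>" "q' \<in> \<rat>" "q \<le> q'"
      have "\<phi> q' x < \<top>" using g2[OF q(2)] by (simp add: le_less_trans)
      then show "F q x \<le> F q' x" using True g1[OF q] by (simp add: F_def enn2real_mono)
    next
      fix q :: real assume "q \<in> \<rat>"
      show "0 \<le> F q x" by (simp add: F_def)
    next
      fix q :: real assume "q \<in> \<rat>" "q < 0"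
      then show "F q x = 0" using True g3 by (simp add: F_def)
    next
      fix q :: real assume "q \<in> \<rat>" "1 \<le> q"
      then show "F q x = 1" using True g4 by (simp add: F_def)
    qed
  next
    case False
    show ?thesis by standard (use False in \<open>auto simp: F_def\<close>)
  qed
  have F_int: "(\<integral>\<^sup>+x. ennreal (F q x) * indicator A x \<partial>\<mu>) = emeasure \<gamma> (A \<times> {..q})"
    if q: "q \<in> \<rat>" and A: "A \<in> sets borel" for q A
  proof -
    have "(\<integral>\<^sup>+x. ennreal (F q x) * indicator A x \<partial>\<mu>) = (\<integral>\<^sup>+x. \<phi> q x * indicator A x \<partial>\<mu>)"
    proof (rule nn_integral_cong_AE)
      show "AE x in \<mu>. ennreal (F q x) * indicator A x = \<phi> q x * indicator A x"
        using AE_Good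
      proof eventually_elim
        case (elim x)
        then have "\<phi> q x \<le> 1" using q unfolding Good_def by auto
        then have "\<phi> q x \<noteq> \<top>" by (auto simp: top_unique)
        then show ?case using elim by (simp add: F_def ennreal_enn2real_if)
      qed
    qed
    also have "\<dots> = emeasure \<gamma> (A \<times> {..q})" by (rule phi_int[OF A])
    finally show ?thesis .
  qed
  define G where "G t x = qcdf.G (\<lambda>q. F q x) t" for t x
  have Glim: "(\<lambda>k. F (dy k t) x) \<longlonglongrightarrow> G t x" for t x
    unfolding G_def by (rule qcdf.G_dy_lim[OF qc])
  have G_meas[measurable]: "G t \<in> borel_measurable borel" for t
    by (rule borel_measurable_LIMSEQ_real[OF Glim]) measurable
  have G01: "0 \<le> G t x" "G t x \<le> 1" for t x
    unfolding G_def by (rule qcdf.G_nonneg[OF qc], rule qcdf.G_le1[OF qc])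
  have G_int: "(\<integral>\<^sup>+x. ennreal (G t x) * indicator A x \<partial>\<mu>) = emeasure \<gamma> (A \<times> {..t})"
    if A: "A \<in> sets borel" for t A
  proof -
    have [measurable]: "A \<in> sets borel" by fact
    define h where "h k x = ennreal (F (dy k t) x) * indicator A x" for k x
    have hx: "h (Suc k) x \<le> h k x" for k x
      unfolding h_def
      by (auto intro!: mult_right_mono ennreal_leI qcdf.mono[OF qc] dy_Rats dy_dec)
    have h_dec: "decseq h"
      by (rule decseq_SucI) (auto simp: le_fun_def hx)
    have h_meas: "h k \<in> borel_measurable \<mu>" for k
    proof -
      have "h k \<in> borel_measurable borel" unfolding h_def by measurable
      then show ?thesis by (simp add: measurable_cong_sets[OF sm refl])
    qed
    have h_int: "integral\<^sup>N \<mu> (h k) = emeasure \<gamma> (A \<times> {..dy k t})" for k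
      unfolding h_def by (rule F_int[OF dy_Rats A])
    have h_INF: "(INF k. h k x) = ennreal (G t x) * indicator A x" for x
    proof -
      have "decseq (\<lambda>k. h k x)" by (rule decseq_SucI) (rule hx)
      then have "(\<lambda>k. h k x) \<longlonglongrightarrow> (INF k. h k x)" by (rule LIMSEQ_INF)
      moreover have "(\<lambda>k. h k x) \<longlonglongrightarrow> ennreal (G t x) * indicator A x"
      proof (cases "x \<in> A")
        case True
        then show ?thesis unfolding h_def by (simp add: tendsto_ennrealI[OF Glim])
      next
        case False
        then show ?thesis unfolding h_def by simp
      qed
      ultimately show ?thesis by (rule LIMSEQ_unique)
    qed
    have "(\<integral>\<^sup>+x. ennreal (G t x) * indicator A x \<partial>\<mu>) = (\<integral>\<^sup>+x. (INF k. h k x) \<partial>\<mu>)"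
      by (simp add: h_INF)
    also have "\<dots> = (INF k. integral\<^sup>N \<mu> (h k))"
      by (rule nn_integral_monotone_convergence_INF_decseq[OF h_dec h_meas, of 0])
         (simp add: h_int gfin less_top[symmetric])
    also have "\<dots> = (INF k. emeasure \<gamma> (A \<times> {..dy k t}))" by (simp add: h_int)
    also have "\<dots> = emeasure \<gamma> (\<Inter>k. A \<times> {..dy k t})"
    proof (rule INF_emeasure_decseq)
      show "range (\<lambda>k. A \<times> {..dy k t}) \<subseteq> sets \<gamma>" by (auto intro: rect_sets A)
      show "decseq (\<lambda>k. A \<times> {..dy k t})"
        by (rule decseq_SucI) (use dy_dec in \<open>auto intro: order_trans\<close>)
      show "emeasure \<gamma> (A \<times> {..dy k t}) \<noteq> \<infinity>" for k by (rule gfin)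
    qed
    also have "(\<Inter>k. A \<times> {..dy k t}) = A \<times> {..t}"
    proof (intro equalityI subsetI)
      fix z assume z: "z \<in> (\<Inter>k. A \<times> {..dy k t})"
      have "snd z \<le> t"
      proof (rule ccontr)
        assume "\<not> snd z \<le> t"
        then obtain K where "\<And>k. k \<ge> K \<Longrightarrow> dy k t < snd z" using dy_eventually_less[of t "snd z"] by auto
        then have "dy K t < snd z" by simp
        moreover have "snd z \<le> dy K t" using z by auto
        ultimately show False by simp
      qed
      then show "z \<in> A \<times> {..t}" using z by (cases z) auto
    next
      fix z assume "z \<in> A \<times> {..t}"
      then show "z \<in> (\<Inter>k. A \<times> {..dy k t})" using dy_gt[of t] by (auto intro: order_trans less_imp_le)
    qed
    finally show ?thesis .
  qed
  define S where "S x v = (if v \<in> {0<..<1} then Inf {s. v \<le> G s x} else 0)" for x v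
  have rcm: "right_continuous_mono (\<lambda>s. G s x) 0 1" for x
    unfolding G_def by (rule qcdf.rcm[OF qc])
  have pseudo: "\<And>x v s. v \<in> {0<..<1} \<Longrightarrow> (v \<le> G s x \<longleftrightarrow> S x v \<le> s)"
  proof -
    fix x :: 'x and v s :: real assume v: "v \<in> {0<..<1}"
    show "v \<le> G s x \<longleftrightarrow> S x v \<le> s"
      using right_continuous_mono.pseudoinverse[OF rcm[of x], of v s] v by (simp add: S_def)
  qed
  have S_meas: "(\<lambda>z. S (fst z) (snd z)) \<in> borel_measurable (borel :: ('x \<times> real) measure)"
  proof (subst borel_measurable_iff_le, intro allI)
    fix a :: real
    have m_fst[measurable]: "(\<lambda>w. G a (fst w)) \<in> borel_measurable (borel :: ('x \<times> real) measure)"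
      by (rule measurable_compose[OF measurable_fst_borel G_meas])
    have m_snd[measurable]: "snd \<in> borel_measurable (borel :: ('x \<times> real) measure)"
      by (rule measurable_snd_borel)
    have eq: "S (fst w) (snd w) \<le> a \<longleftrightarrow> (snd w \<in> {0<..<1} \<and> snd w \<le> G a (fst w)) \<or> (snd w \<notin> {0<..<1} \<and> 0 \<le> a)" for w :: "'x \<times> real"
    proof (cases "snd w \<in> {0<..<1}")
      case True
      show ?thesis using True by (simp add: pseudo[OF True])
    next
      case False
      then have "S (fst w) (snd w) = 0" unfolding S_def by (rule if_not_P)
      then show ?thesis using False by auto
    qed
    have "{w \<in> space (borel :: ('x \<times> real) measure). (snd w \<in> {0<..<1} \<and> snd w \<le> G a (fst w)) \<or> (snd w \<notin> {0<..<1} \<and> 0 \<le> a)} \<in> sets borel"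
      by measurable
    then show "{w \<in> space (borel :: ('x \<times> real) measure). S (fst w) (snd w) \<le> a} \<in> sets borel"
      by (simp only: eq)
  qed
  define \<Omega> where "\<Omega> = restrict_space lborel {0<..<1::real}"
  interpret \<Omega>: prob_space \<Omega> unfolding \<Omega>_def by (rule prob_space_Omega)
  have spO: "space \<Omega> = {0<..<1}" by (simp add: \<Omega>_def space_restrict_space)
  have pP: "prob_space (\<mu> \<Otimes>\<^sub>M \<Omega>)" by (rule prob_space_pair[OF pm \<Omega>.prob_space_axioms])
  interpret P: prob_space "\<mu> \<Otimes>\<^sub>M \<Omega>" by (rule pP)
  have id_meas: "(\<lambda>z. z) \<in> measurable (\<mu> \<Otimes>\<^sub>M \<Omega>) (borel :: ('x \<times> real) measure)"
  proof -
    have m1: "(\<lambda>x. x) \<in> measurable \<mu> borel" by (rule measurable_ident_sets[OF sm])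
    have m2: "(\<lambda>x. x) \<in> measurable \<Omega> borel" unfolding \<Omega>_def
      by (rule measurable_restrict_space1, rule measurable_ident_sets) simp
    have "(\<lambda>z. z) \<in> measurable (\<mu> \<Otimes>\<^sub>M \<Omega>) (borel \<Otimes>\<^sub>M borel)"
    proof (subst measurable_pair_iff, intro conjI)
      have "(\<lambda>z. (\<lambda>x. x) (fst z)) \<in> measurable (\<mu> \<Otimes>\<^sub>M \<Omega>) borel"
        by (rule measurable_compose[OF measurable_fst m1])
      then show "fst \<circ> (\<lambda>z. z) \<in> measurable (\<mu> \<Otimes>\<^sub>M \<Omega>) borel" by (simp add: comp_def)
      have "(\<lambda>z. (\<lambda>x. x) (snd z)) \<in> measurable (\<mu> \<Otimes>\<^sub>M \<Omega>) borel"
        by (rule measurable_compose[OF measurable_snd m2])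
      then show "snd \<circ> (\<lambda>z. z) \<in> measurable (\<mu> \<Otimes>\<^sub>M \<Omega>) borel" by (simp add: comp_def)
    qed
    then show ?thesis by (simp add: borel_prod)
  qed
  define \<Psi> where "\<Psi> = (\<lambda>(x::'x, v::real). (x, S x v))"
  have Psi_eq: "\<Psi> = (\<lambda>z. (fst z, S (fst z) (snd z)))" by (auto simp: \<Psi>_def fun_eq_iff split: prod.split)
  have Psi_b: "(\<lambda>z. (fst z, S (fst z) (snd z))) \<in> measurable (borel :: ('x \<times> real) measure) borel"
  proof -
    have "(\<lambda>z. (fst z, S (fst z) (snd z))) \<in> measurable (borel :: ('x \<times> real) measure) (borel \<Otimes>\<^sub>M borel)"
      by (rule measurable_Pair[OF measurable_fst_borel S_meas])
    then show ?thesis by (simp add: borel_prod)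
  qed
  have Psi_meas: "\<Psi> \<in> measurable (\<mu> \<Otimes>\<^sub>M \<Omega>) borel"
    unfolding Psi_eq using measurable_compose[OF id_meas Psi_b] by simp
  have "distr (\<mu> \<Otimes>\<^sub>M \<Omega>) borel \<Psi> = \<gamma>"
  proof (rule measure_eq_rect)
    show "sets (distr (\<mu> \<Otimes>\<^sub>M \<Omega>) borel \<Psi>) = sets borel" by simp
    show "sets \<gamma> = sets borel" by (rule sg)
    show "finite_measure (distr (\<mu> \<Otimes>\<^sub>M \<Omega>) borel \<Psi>)"
      by (rule prob_space.finite_measure[OF P.prob_space_distr[OF Psi_meas]])
    show "finite_measure \<gamma>" by (rule prob_space.finite_measure[OF pg])
    fix A :: "'x set" and t :: real assume A: "A \<in> sets borel"
    have set: "A \<times> {..t} \<in> sets (borel :: ('x \<times> real) measure)"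
      using A unfolding borel_prod[symmetric] by (intro pair_measureI) auto
    have spP: "space (\<mu> \<Otimes>\<^sub>M \<Omega>) = UNIV \<times> {0<..<1}" by (simp add: space_pair_measure spm spO)
    have slice: "Pair x -` (\<Psi> -` (A \<times> {..t}) \<inter> space (\<mu> \<Otimes>\<^sub>M \<Omega>)) =
        (if x \<in> A then {0<..<1} \<inter> {..G t x} else {})" for x
    proof (cases "x \<in> A")
      case True
      have "Pair x -` (\<Psi> -` (A \<times> {..t}) \<inter> space (\<mu> \<Otimes>\<^sub>M \<Omega>)) = {v \<in> {0<..<1}. S x v \<le> t}"
        using True by (auto simp: spP \<Psi>_def)
      also have "\<dots> = {0<..<1} \<inter> {..G t x}" by (auto simp: pseudo)
      finally show ?thesis using True by simp
    next
      case False
      then show ?thesis by (auto simp: spP \<Psi>_def)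
    qed
    have "emeasure (distr (\<mu> \<Otimes>\<^sub>M \<Omega>) borel \<Psi>) (A \<times> {..t}) =
        emeasure (\<mu> \<Otimes>\<^sub>M \<Omega>) (\<Psi> -` (A \<times> {..t}) \<inter> space (\<mu> \<Otimes>\<^sub>M \<Omega>))"
      by (rule emeasure_distr[OF Psi_meas set])
    also have "\<dots> = (\<integral>\<^sup>+x. emeasure \<Omega> (Pair x -` (\<Psi> -` (A \<times> {..t}) \<inter> space (\<mu> \<Otimes>\<^sub>M \<Omega>))) \<partial>\<mu>)"
      by (rule \<Omega>.emeasure_pair_measure_alt[OF measurable_sets[OF Psi_meas set]])
    also have "\<dots> = (\<integral>\<^sup>+x. ennreal (G t x) * indicator A x \<partial>\<mu>)"
    proof (rule nn_integral_cong)
      fix x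
      show "emeasure \<Omega> (Pair x -` (\<Psi> -` (A \<times> {..t}) \<inter> space (\<mu> \<Otimes>\<^sub>M \<Omega>))) = ennreal (G t x) * indicator A x"
        unfolding slice using emeasure_Omega_Iic[OF G01[of t x]] by (simp add: \<Omega>_def)
    qed
    also have "\<dots> = emeasure \<gamma> (A \<times> {..t})" by (rule G_int[OF A])
    finally show "emeasure (distr (\<mu> \<Otimes>\<^sub>M \<Omega>) borel \<Psi>) (A \<times> {..t}) = emeasure \<gamma> (A \<times> {..t})" .
  qed
  then show ?thesis using S_meas unfolding \<Psi>_def \<Omega>_def by blast
qed

lemma meas_map_snd:
  assumes f: "f \<in> borel_measurable borel"
  shows "(\<lambda>z. (fst z, f (snd z))) \<in> (borel :: ('a::second_countable_topology \<times> 'b::second_countable_topology) measure) \<rightarrow>\<^sub>M (borel :: ('a \<times> 'c::second_countable_topology) measure)"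
proof -
  have "(\<lambda>z. (fst z, f (snd z))) \<in> (borel :: ('a \<times> 'b) measure) \<rightarrow>\<^sub>M (borel \<Otimes>\<^sub>M borel)"
    by (rule measurable_Pair[OF measurable_fst_borel measurable_compose[OF measurable_snd_borel f]])
  then show ?thesis by (simp add: borel_prod)
qed

lemma meas_map_fst:
  assumes f: "f \<in> borel_measurable borel"
  shows "(\<lambda>z. (f (fst z), snd z)) \<in> (borel :: ('a::second_countable_topology \<times> 'b::second_countable_topology) measure) \<rightarrow>\<^sub>M (borel :: ('c::second_countable_topology \<times> 'b) measure)"
proof -
  have "(\<lambda>z. (f (fst z), snd z)) \<in> (borel :: ('a \<times> 'b) measure) \<rightarrow>\<^sub>M (borel \<Otimes>\<^sub>M borel)"
    by (rule measurable_Pair[OF measurable_compose[OF measurable_fst_borel f] measurable_snd_borel])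
  then show ?thesis by (simp add: borel_prod)
qed

lemma id_pair_meas:
  assumes m1: "(\<lambda>x. x) \<in> M1 \<rightarrow>\<^sub>M borel" and m2: "(\<lambda>x. x) \<in> M2 \<rightarrow>\<^sub>M borel"
  shows "(\<lambda>z. z) \<in> (M1 \<Otimes>\<^sub>M M2) \<rightarrow>\<^sub>M (borel :: ('a::second_countable_topology \<times> 'b::second_countable_topology) measure)"
proof -
  have "(\<lambda>z. z) \<in> measurable (M1 \<Otimes>\<^sub>M M2) (borel \<Otimes>\<^sub>M borel)"
  proof (subst measurable_pair_iff, intro conjI)
    have "(\<lambda>z. (\<lambda>x. x) (fst z)) \<in> measurable (M1 \<Otimes>\<^sub>M M2) borel"
      by (rule measurable_compose[OF measurable_fst m1])
    then show "fst \<circ> (\<lambda>z. z) \<in> measurable (M1 \<Otimes>\<^sub>M M2) borel" by (simp add: comp_def)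
    have "(\<lambda>z. (\<lambda>x. x) (snd z)) \<in> measurable (M1 \<Otimes>\<^sub>M M2) borel"
      by (rule measurable_compose[OF measurable_snd m2])
    then show "snd \<circ> (\<lambda>z. z) \<in> measurable (M1 \<Otimes>\<^sub>M M2) borel" by (simp add: comp_def)
  qed
  then show ?thesis by (simp add: borel_prod)
qed

lemma Omega_id: "(\<lambda>x. x) \<in> restrict_space lborel {0<..<1::real} \<rightarrow>\<^sub>M borel"
  by (rule measurable_restrict_space1, rule measurable_ident_sets) simp

theorem mainTheorem19:
  fixes \<gamma> :: "nat \<Rightarrow> ('x::polish_space \<times> 'y::polish_space) measure"
    and \<mu> :: "'x measure"
  assumes sets_\<gamma>: "\<And>n. n \<ge> 1 \<Longrightarrow> sets (\<gamma> n) = sets borel"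
    and prob_\<gamma>: "\<And>n. n \<ge> 1 \<Longrightarrow> prob_space (\<gamma> n)"
    and marg: "\<And>n. n \<ge> 1 \<Longrightarrow> distr (\<gamma> n) borel fst = \<mu>"
  shows "\<exists>(\<xi> :: real \<Rightarrow> 'x) (\<xi>s :: nat \<Rightarrow> real \<Rightarrow> 'y).
           \<xi> \<in> borel_measurable (restrict_space borel {0<..<1}) \<and>
           (\<forall>n\<ge>1. \<xi>s n \<in> borel_measurable (restrict_space borel {0<..<1}) \<and>
                    distr (restrict_space lborel {0<..<1}) borel (\<lambda>u. (\<xi> u, \<xi>s n u)) = \<gamma> n)"
proof -
  define \<Omega> where "\<Omega> = restrict_space lborel {0<..<1::real}"
  interpret \<Omega>: prob_space \<Omega> unfolding \<Omega>_def by (rule prob_space_Omega)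
  have fst_g: "fst \<in> \<gamma> n \<rightarrow>\<^sub>M borel" if "n \<ge> 1" for n
    by (subst measurable_cong_sets[OF sets_\<gamma>[OF that] refl]) (rule measurable_fst_borel)
  have sm: "sets \<mu> = sets borel" using marg[of 1] by (metis sets_distr order_refl)
  have pm: "prob_space \<mu>" using marg[of 1] prob_space.prob_space_distr[OF prob_\<gamma>[of 1] fst_g[of 1]] by simp
  obtain a :: "real \<Rightarrow> 'x" where a: "a \<in> borel_measurable borel" "distr \<Omega> borel a = \<mu>"
    using polish_sample[OF sm pm] unfolding \<Omega>_def by blast
  have aO: "a \<in> \<Omega> \<rightarrow>\<^sub>M borel" unfolding \<Omega>_def using a(1) by (intro measurable_restrict_space1) simp
  define \<nu>2 where "\<nu>2 = distr (\<Omega> \<Otimes>\<^sub>M \<Omega>) (borel :: (real \<times> real) measure) (\<lambda>z. z)"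
  have idOO: "(\<lambda>z. z) \<in> (\<Omega> \<Otimes>\<^sub>M \<Omega>) \<rightarrow>\<^sub>M (borel :: (real \<times> real) measure)"
    unfolding \<Omega>_def by (rule id_pair_meas[OF Omega_id Omega_id])
  have pOO: "prob_space (\<Omega> \<Otimes>\<^sub>M \<Omega>)" by (rule prob_space_pair[OF \<Omega>.prob_space_axioms \<Omega>.prob_space_axioms])
  have p\<nu>2: "prob_space \<nu>2" unfolding \<nu>2_def by (rule prob_space.prob_space_distr[OF pOO idOO])
  obtain T :: "real \<Rightarrow> real \<times> real" where T: "T \<in> borel_measurable borel" "distr \<Omega> borel T = \<nu>2"
    using polish_sample[OF _ p\<nu>2] unfolding \<Omega>_def \<nu>2_def by auto
  obtain eY :: "'y \<Rightarrow> real" and gY where eg: "eY \<in> borel_measurable borel" "gY \<in> borel_measurable borel"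
    "\<And>x. gY (eY x) = x" "\<And>x. 0 \<le> eY x \<and> eY x \<le> 1" by (erule polish_embedding)
  define \<gamma>' where "\<gamma>' n = distr (\<gamma> n) borel (\<lambda>z. (fst z, eY (snd z)))" for n
  have mE: "(\<lambda>z. (fst z, eY (snd z))) \<in> (borel :: ('x \<times> 'y) measure) \<rightarrow>\<^sub>M (borel :: ('x \<times> real) measure)"
    by (rule meas_map_snd[OF eg(1)])
  have mG: "(\<lambda>z. (fst z, gY (snd z))) \<in> (borel :: ('x \<times> real) measure) \<rightarrow>\<^sub>M (borel :: ('x \<times> 'y) measure)"
    by (rule meas_map_snd[OF eg(2)])
  have ex: "\<exists>S. (\<lambda>z. S (fst z) (snd z)) \<in> borel_measurable borel \<and>
           distr (\<mu> \<Otimes>\<^sub>M \<Omega>) borel (\<lambda>(x,v). (x, S x v)) = \<gamma>' n" if n: "n \<ge> 1" for n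
  proof -
    have mE': "(\<lambda>z. (fst z, eY (snd z))) \<in> \<gamma> n \<rightarrow>\<^sub>M (borel :: ('x \<times> real) measure)"
      by (subst measurable_cong_sets[OF sets_\<gamma>[OF n] refl]) (rule mE)
    show ?thesis unfolding \<Omega>_def
    proof (rule cond_sample)
      show "sets (\<gamma>' n) = sets borel" by (simp add: \<gamma>'_def)
      show "prob_space (\<gamma>' n)" unfolding \<gamma>'_def by (rule prob_space.prob_space_distr[OF prob_\<gamma>[OF n] mE'])
      have "distr (\<gamma>' n) borel fst = distr (\<gamma> n) borel (fst \<circ> (\<lambda>z. (fst z, eY (snd z))))"
        unfolding \<gamma>'_def by (rule distr_distr[OF measurable_fst_borel mE'])
      also have "\<dots> = distr (\<gamma> n) borel fst" by (simp add: comp_def)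
      also have "\<dots> = \<mu>" by (rule marg[OF n])
      finally show "distr (\<gamma>' n) borel fst = \<mu>" .
      have "AE z in \<gamma> n. snd ((\<lambda>z. (fst z, eY (snd z))) z) \<in> {0..1}" using eg(4) by simp
      moreover have setS: "{z \<in> space (borel :: ('x \<times> real) measure). snd z \<in> {0..1}} \<in> sets borel"
      proof -
        have "snd -` {0..1::real} \<inter> space (borel :: ('x \<times> real) measure) \<in> sets borel"
          by (rule measurable_sets[OF measurable_snd_borel]) simp
        moreover have "snd -` {0..1::real} \<inter> space (borel :: ('x \<times> real) measure) = {z \<in> space borel. snd z \<in> {0..1}}"
          by auto
        ultimately show ?thesis by simp
      qed
      ultimately show "AE z in \<gamma>' n. snd z \<in> {0..1}" unfolding \<gamma>'_def
        using AE_distr_iff[OF mE' setS] by simp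
    qed
  qed
  then obtain S :: "nat \<Rightarrow> 'x \<Rightarrow> real \<Rightarrow> real" where S: "\<And>n. n \<ge> 1 \<Longrightarrow> (\<lambda>z. S n (fst z) (snd z)) \<in> borel_measurable borel \<and>
           distr (\<mu> \<Otimes>\<^sub>M \<Omega>) borel (\<lambda>(x,v). (x, S n x v)) = \<gamma>' n"
    by metis
  define \<xi> where "\<xi> u = a (fst (T u))" for u
  define \<xi>s where "\<xi>s n u = gY (S n (\<xi> u) (snd (T u)))" for n u
  have \<xi>_meas: "\<xi> \<in> borel_measurable borel" unfolding \<xi>_def
    by (rule measurable_compose[OF measurable_compose[OF T(1) measurable_fst_borel] a(1)])
  show ?thesis
  proof (intro exI conjI allI impI)
    show "\<xi> \<in> borel_measurable (restrict_space borel {0<..<1})"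
      by (rule measurable_restrict_space1[OF \<xi>_meas])
    fix n :: nat assume n: "1 \<le> n"
    have Sn: "(\<lambda>z. S n (fst z) (snd z)) \<in> borel_measurable borel" using S[OF n] by blast
    have pair1: "(\<lambda>u. (\<xi> u, snd (T u))) \<in> borel \<rightarrow>\<^sub>M (borel :: ('x \<times> real) measure)"
    proof -
      have "(\<lambda>u. (\<xi> u, snd (T u))) \<in> borel \<rightarrow>\<^sub>M (borel \<Otimes>\<^sub>M borel)"
        by (rule measurable_Pair[OF \<xi>_meas measurable_compose[OF T(1) measurable_snd_borel]])
      then show ?thesis by (simp add: borel_prod)
    qed
    have \<xi>s_meas: "\<xi>s n \<in> borel_measurable borel"
    proof -
      have "(\<lambda>u. (\<lambda>z. S n (fst z) (snd z)) ((\<lambda>u. (\<xi> u, snd (T u))) u)) \<in> borel_measurable borel"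
        by (rule measurable_compose[OF pair1 Sn])
      then have "(\<lambda>u. S n (\<xi> u) (snd (T u))) \<in> borel_measurable borel" by simp
      then show ?thesis unfolding \<xi>s_def[abs_def] by (rule measurable_compose[OF _ eg(2)])
    qed
    show "\<xi>s n \<in> borel_measurable (restrict_space borel {0<..<1})"
      by (rule measurable_restrict_space1[OF \<xi>s_meas])
    show "distr (restrict_space lborel {0<..<1}) borel (\<lambda>u. (\<xi> u, \<xi>s n u)) = \<gamma> n"
    proof -
      define \<Phi> where "\<Phi> z = (a (fst z), gY (S n (a (fst z)) (snd z)))" for z :: "real \<times> real"
      define Q where "Q = (\<lambda>(x::real, y::real). (a x, y))"
      define \<Psi> where "\<Psi> = (\<lambda>(x::'x, v::real). (x, gY (S n x v)))"
      have mS: "(\<lambda>z. (fst z, S n (fst z) (snd z))) \<in> (borel :: ('x \<times> real) measure) \<rightarrow>\<^sub>M (borel :: ('x \<times> real) measure)"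
      proof -
        have "(\<lambda>z. (fst z, S n (fst z) (snd z))) \<in> (borel :: ('x \<times> real) measure) \<rightarrow>\<^sub>M (borel \<Otimes>\<^sub>M borel)"
          by (rule measurable_Pair[OF measurable_fst_borel Sn])
        then show ?thesis by (simp add: borel_prod)
      qed
      have Psi_eq: "\<Psi> = (\<lambda>z. (fst z, gY (snd z))) \<circ> (\<lambda>z. (fst z, S n (fst z) (snd z)))"
        by (auto simp: \<Psi>_def fun_eq_iff split: prod.split)
      have Psi_b: "\<Psi> \<in> (borel :: ('x \<times> real) measure) \<rightarrow>\<^sub>M (borel :: ('x \<times> 'y) measure)"
        unfolding Psi_eq comp_def by (rule measurable_compose[OF mS mG])
      have Q_eq: "Q = (\<lambda>z. (a (fst z), snd z))" by (auto simp: Q_def fun_eq_iff split: prod.split)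
      have Q_b: "Q \<in> (borel :: (real \<times> real) measure) \<rightarrow>\<^sub>M (borel :: ('x \<times> real) measure)"
        unfolding Q_eq by (rule meas_map_fst[OF a(1)])
      have Phi_eq: "\<Phi> = \<Psi> \<circ> Q" by (auto simp: \<Phi>_def \<Psi>_def Q_def fun_eq_iff)
      have Phi_b: "\<Phi> \<in> (borel :: (real \<times> real) measure) \<rightarrow>\<^sub>M (borel :: ('x \<times> 'y) measure)"
        unfolding Phi_eq by (rule measurable_comp[OF Q_b Psi_b])
      have sOm: "sets (\<mu> \<Otimes>\<^sub>M \<Omega>) = sets (borel \<Otimes>\<^sub>M \<Omega>)"
        by (rule sets_pair_measure_cong[OF sm refl])
      have idmO: "(\<lambda>z. z) \<in> (\<mu> \<Otimes>\<^sub>M \<Omega>) \<rightarrow>\<^sub>M (borel :: ('x \<times> real) measure)"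
        unfolding \<Omega>_def by (rule id_pair_meas[OF measurable_ident_sets[OF sm] Omega_id])
      have Psi_mO: "\<Psi> \<in> (\<mu> \<Otimes>\<^sub>M \<Omega>) \<rightarrow>\<^sub>M (borel :: ('x \<times> 'y) measure)"
        using measurable_compose[OF idmO Psi_b] by simp
      have Psi_bO: "\<Psi> \<in> (borel \<Otimes>\<^sub>M \<Omega>) \<rightarrow>\<^sub>M (borel :: ('x \<times> 'y) measure)"
        using Psi_mO by (simp add: measurable_cong_sets[OF sOm refl])
      have Q_OO: "Q \<in> (\<Omega> \<Otimes>\<^sub>M \<Omega>) \<rightarrow>\<^sub>M (borel \<Otimes>\<^sub>M \<Omega>)"
        unfolding Q_eq by (rule measurable_Pair[OF measurable_compose[OF measurable_fst aO] measurable_snd])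
      have PD: "distr (\<Omega> \<Otimes>\<^sub>M \<Omega>) (borel \<Otimes>\<^sub>M \<Omega>) Q = \<mu> \<Otimes>\<^sub>M \<Omega>"
      proof -
        have did: "distr \<Omega> \<Omega> id = \<Omega>" unfolding id_def by (rule distr_id)
        have "distr \<Omega> borel a \<Otimes>\<^sub>M \<Omega> = distr (\<Omega> \<Otimes>\<^sub>M \<Omega>) (borel \<Otimes>\<^sub>M \<Omega>) (\<lambda>(x, y). (a x, id y))"
          using pair_measure_distr[OF aO measurable_ident[of \<Omega>]] did \<Omega>.sigma_finite_measure_axioms
          by simp
        then show ?thesis using a(2) by (simp add: Q_def)
      qed
      have "distr \<Omega> borel (\<lambda>u. (\<xi> u, \<xi>s n u)) = distr \<Omega> borel (\<Phi> \<circ> T)"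
        by (rule distr_cong) (auto simp: \<Phi>_def \<xi>_def \<xi>s_def)
      also have "\<dots> = distr (distr \<Omega> borel T) borel \<Phi>"
        unfolding \<Omega>_def
        by (rule distr_distr[symmetric, OF Phi_b]) (rule measurable_restrict_space1, simp add: T(1))
      also have "\<dots> = distr (\<Omega> \<Otimes>\<^sub>M \<Omega>) borel (\<Phi> \<circ> (\<lambda>z. z))"
        unfolding T(2) \<nu>2_def by (rule distr_distr[OF Phi_b idOO])
      also have "\<dots> = distr (\<Omega> \<Otimes>\<^sub>M \<Omega>) borel (\<Psi> \<circ> Q)"
        by (simp add: Phi_eq comp_def)
      also have "\<dots> = distr (distr (\<Omega> \<Otimes>\<^sub>M \<Omega>) (borel \<Otimes>\<^sub>M \<Omega>) Q) borel \<Psi>"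
        by (rule distr_distr[symmetric, OF Psi_bO Q_OO])
      also have "\<dots> = distr (\<mu> \<Otimes>\<^sub>M \<Omega>) borel \<Psi>" by (simp only: PD)
      also have "\<dots> = distr (\<mu> \<Otimes>\<^sub>M \<Omega>) borel ((\<lambda>z. (fst z, gY (snd z))) \<circ> (\<lambda>(x,v). (x, S n x v)))"
        by (rule distr_cong) (auto simp: \<Psi>_def)
      also have "\<dots> = distr (distr (\<mu> \<Otimes>\<^sub>M \<Omega>) borel (\<lambda>(x,v). (x, S n x v))) borel (\<lambda>z. (fst z, gY (snd z)))"
      proof (rule distr_distr[symmetric, OF mG])
        have "(\<lambda>(x,v). (x, S n x v)) = (\<lambda>z. (fst z, S n (fst z) (snd z)))"
          by (auto simp: fun_eq_iff split: prod.split)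
        then show "(\<lambda>(x,v). (x, S n x v)) \<in> (\<mu> \<Otimes>\<^sub>M \<Omega>) \<rightarrow>\<^sub>M (borel :: ('x \<times> real) measure)"
          using measurable_compose[OF idmO mS] by simp
      qed
      also have "\<dots> = distr (\<gamma>' n) borel (\<lambda>z. (fst z, gY (snd z)))" using S[OF n] by simp
      also have "\<dots> = distr (\<gamma> n) borel ((\<lambda>z. (fst z, gY (snd z))) \<circ> (\<lambda>z. (fst z, eY (snd z))))"
        unfolding \<gamma>'_def
        by (rule distr_distr[OF mG]) (subst measurable_cong_sets[OF sets_\<gamma>[OF n] refl], rule mE)
      also have "\<dots> = distr (\<gamma> n) borel (\<lambda>z. z)"
        by (rule distr_cong) (auto simp: eg(3))
      also have "\<dots> = \<gamma> n" by (rule distr_id2) (simp add: sets_\<gamma>[OF n])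
      finally show ?thesis unfolding \<Omega>_def .
    qed
  qed
qed

end
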